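(* Let $r,s,t$ be nonzero reals with $r+s+t=0$ and $\lambda=(\lambda_k)_{k\ge0}$ a strictly increasing sequence of positive reals with $\lambda_k\to\infty$. For $x\in\omega$ let $\widehat W_n(x)=\frac{1}{\lambda_n}\sum_{k=0}^n(\lambda_k-\lambda_{k-1})(rx_k+sx_{k-1}+tx_{k-2})$ and $c_0^\lambda(\widehat B)=\{x\in\omega:\lim_{n\to\infty}\widehat W_n(x)=0\}$. Then $c\subsetneq c_0^\lambda(\widehat B)$.
   Context: $\omega$: all complex sequences indexed by $\mathbb{N}=\{0,1,\dots\}$; $c$: convergent sequences. Convention: terms with negative subscript are $0$ ($x_{-1}=x_{-2}=0$, $\lambda_{-1}=0$). *)

theory Defs
  imports "HOL-Analysis.Analysis"
begin

definition ext0 :: "(nat \<Rightarrow> 'a::zero) \<Rightarrow> int \<Rightarrow> 'a" where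
  "ext0 x i = (if i < 0 then 0 else x (nat i))"

definition c_seq :: "(nat \<Rightarrow> complex) set" where
  "c_seq = {x. convergent x}"

definition W_hat :: "real \<Rightarrow> real \<Rightarrow> real \<Rightarrow> (nat \<Rightarrow> real) \<Rightarrow> nat \<Rightarrow> (nat \<Rightarrow> complex) \<Rightarrow> complex" where
  "W_hat r s t lam n x =
     complex_of_real (1 / lam n) *
     (\<Sum>k=0..n. complex_of_real (ext0 lam (int k) - ext0 lam (int k - 1)) *
        (complex_of_real r * ext0 x (int k) + complex_of_real s * ext0 x (int k - 1)
         + complex_of_real t * ext0 x (int k - 2)))"

definition c0_lambda_B :: "real \<Rightarrow> real \<Rightarrow> real \<Rightarrow> (nat \<Rightarrow> real) \<Rightarrow> (nat \<Rightarrow> complex) set" where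
  "c0_lambda_B r s t lam = {x. (\<lambda>n. W_hat r s t lam n x) \<longlonglongrightarrow> 0}"

end

theory Submission
  imports Defs "HOL-Real_Asymp.Real_Asymp"
begin

lemma telesc:
  "(\<Sum>k=0..n. ext0 lam (int k) - ext0 lam (int k - 1)) = (lam n :: real)"
proof (induction n)
  case 0 then show ?case by (simp add: ext0_def)
next
  case (Suc n)
  have "int (Suc n) - 1 = int n" by simp
  then show ?case using Suc by (simp add: ext0_def)
qed

lemma toeplitz:
  fixes lam :: "nat \<Rightarrow> real" and y :: "nat \<Rightarrow> complex"
  assumes sm: "strict_mono lam" and pos: "\<And>k. lam k > 0"
    and lim: "filterlim lam at_top sequentially"
    and y: "y \<longlonglongrightarrow> 0"
  shows "(\<lambda>n. complex_of_real (1 / lam n) *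
     (\<Sum>k=0..n. complex_of_real (ext0 lam (int k) - ext0 lam (int k - 1)) * y k)) \<longlonglongrightarrow> 0"
proof -
  define w where "w k = ext0 lam (int k) - ext0 lam (int k - 1)" for k
  have wpos: "w k > 0" for k
  proof (cases k)
    case 0 then show ?thesis using pos by (simp add: w_def ext0_def)
  next
    case (Suc m)
    have "int (Suc m) - 1 = int m" by simp
    then show ?thesis using Suc sm by (simp add: w_def ext0_def strict_mono_def)
  qed
  have wsum: "(\<Sum>k=0..n. w k) = lam n" for n unfolding w_def by (rule telesc)
  show ?thesis unfolding w_def[symmetric]
  proof (rule LIMSEQ_I)
    fix e :: real assume e: "e > 0"
    from y e obtain M where M: "\<And>k. k \<ge> M \<Longrightarrow> norm (y k) < e/2"
      by (metis LIMSEQ_iff diff_zero half_gt_zero)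
    define C where "C = (\<Sum>k<M. w k * norm (y k))"
    have C0: "C \<ge> 0" unfolding C_def using wpos by (intro sum_nonneg) (simp add: less_imp_le)
    from lim have "eventually (\<lambda>n. lam n > 2 * C / e) sequentially"
      by (simp add: filterlim_at_top_dense)
    then obtain N where N: "\<And>n. n \<ge> N \<Longrightarrow> lam n > 2 * C / e"
      by (auto simp: eventually_sequentially)
    show "\<exists>no. \<forall>n\<ge>no. norm (complex_of_real (1 / lam n) *
        (\<Sum>k = 0..n. complex_of_real (w k) * y k) - 0) < e"
    proof (intro exI allI impI)
      fix n assume n: "n \<ge> N"
      have pt: "w k * norm (y k) \<le> (if k < M then w k * norm (y k) else 0) + e/2 * w k" for k
        using M[of k] wpos[of k] e by (auto intro: mult_left_mono less_imp_le simp: mult.commute)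
      have "norm (\<Sum>k = 0..n. complex_of_real (w k) * y k) \<le> (\<Sum>k = 0..n. w k * norm (y k))"
        by (rule order_trans[OF norm_sum]) (simp add: norm_mult abs_of_pos wpos)
      also have "\<dots> \<le> (\<Sum>k = 0..n. (if k < M then w k * norm (y k) else 0) + e/2 * w k)"
        by (intro sum_mono pt)
      also have "\<dots> = (\<Sum>k = 0..n. (if k < M then w k * norm (y k) else 0)) + e/2 * lam n"
        by (simp add: sum.distrib sum_distrib_left[symmetric] wsum del: times_divide_eq_left times_divide_eq_right)
      also have "(\<Sum>k = 0..n. (if k < M then w k * norm (y k) else 0)) = (\<Sum>k \<in> {0..n} \<inter> {..<M}. w k * norm (y k))"
        by (simp add: sum.inter_restrict)
      also have "\<dots> \<le> C" unfolding C_def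
        proof (rule sum_mono2)
          show "\<And>b. b \<in> {..<M} - {0..n} \<inter> {..<M} \<Longrightarrow> 0 \<le> w b * norm (y b)"
            using wpos by (simp add: less_imp_le)
        qed auto
      finally have b: "norm (\<Sum>k = 0..n. complex_of_real (w k) * y k) \<le> C + e/2 * lam n" by simp
      have ln: "lam n > 0" using pos by simp
      have "norm (complex_of_real (1 / lam n) * (\<Sum>k = 0..n. complex_of_real (w k) * y k))
          = norm (\<Sum>k = 0..n. complex_of_real (w k) * y k) / lam n"
        using ln by (simp add: norm_divide)
      also have "\<dots> \<le> (C + e/2 * lam n) / lam n" using b ln by (simp add: divide_right_mono)
      also have "\<dots> = C / lam n + e/2" using ln by (simp add: field_simps)
      also have "\<dots> < e"
      proof -
        have "2 * C / e < lam n" using N n by simp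
        then have "2 * C < e * lam n" using e by (simp add: field_simps)
        then have "C / lam n < e/2" using ln by (simp add: pos_divide_less_eq mult.commute)
        then show ?thesis by linarith
      qed
      finally show "norm (complex_of_real (1 / lam n) *
        (\<Sum>k = 0..n. complex_of_real (w k) * y k) - 0) < e" by simp
    qed
  qed
qed

lemma W_zero:
  fixes lam :: "nat \<Rightarrow> real" and x :: "nat \<Rightarrow> complex"
  assumes "strict_mono lam" and "\<And>k. lam k > 0"
    and "filterlim lam at_top sequentially"
    and y: "(\<lambda>k. complex_of_real r * x (k+2) + complex_of_real s * x (k+1)
         + complex_of_real t * x k) \<longlonglongrightarrow> 0"
  shows "x \<in> c0_lambda_B r s t lam"
proof -
  define yy where "yy k = complex_of_real r * ext0 x (int k) + complex_of_real s * ext0 x (int k - 1)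
         + complex_of_real t * ext0 x (int k - 2)" for k
  have "(\<lambda>k. yy (k + 2)) \<longlonglongrightarrow> 0"
  proof -
    have "yy (k+2) = complex_of_real r * x (k+2) + complex_of_real s * x (k+1)
         + complex_of_real t * x k" for k
    proof -
      have a: "int (k+2) - 1 = int (k+1)" "int (k+2) - 2 = int k" by simp_all
      have b: "ext0 x (int (k+2)) = x (k+2)" "ext0 x (int (k+1)) = x (k+1)" "ext0 x (int k) = x k"
        unfolding ext0_def by (simp_all only: nat_int of_nat_less_0_iff if_False)
      show ?thesis unfolding yy_def a b by simp
    qed
    then show ?thesis using y by simp
  qed
  then have "yy \<longlonglongrightarrow> 0" by (rule LIMSEQ_offset)
  from toeplitz[OF assms(1-3) this] show ?thesis
    unfolding c0_lambda_B_def W_hat_def yy_def by simp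
qed

theorem theorem5:
  fixes r s t :: real and lam :: "nat \<Rightarrow> real"
  assumes "r \<noteq> 0" and "s \<noteq> 0" and "t \<noteq> 0" and "r + s + t = 0"
    and "strict_mono lam" and "\<And>k. lam k > 0"
    and "filterlim lam at_top sequentially"
  shows "c_seq \<subset> c0_lambda_B r s t lam"
proof -
  have sub: "c_seq \<subseteq> c0_lambda_B r s t lam"
  proof
    fix x assume "x \<in> c_seq"
    then obtain L where L: "x \<longlonglongrightarrow> L" unfolding c_seq_def by (auto simp: convergent_def)
    have "(\<lambda>k. complex_of_real r * x (k+2) + complex_of_real s * x (k+1)
         + complex_of_real t * x k) \<longlonglongrightarrow> complex_of_real r * L + complex_of_real s * L + complex_of_real t * L"
      by (intro tendsto_intros L LIMSEQ_ignore_initial_segment)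
    moreover have "complex_of_real r * L + complex_of_real s * L + complex_of_real t * L = 0"
    proof -
      have "complex_of_real r * L + complex_of_real s * L + complex_of_real t * L
          = complex_of_real (r + s + t) * L" by (simp add: distrib_right)
      then show ?thesis using assms(4) by simp
    qed
    ultimately show "x \<in> c0_lambda_B r s t lam"
      using W_zero[OF assms(5-7)] by simp
  qed
  define x where "x k = complex_of_real (ln (real k + 1))" for k
  have xin: "x \<in> c0_lambda_B r s t lam"
  proof (rule W_zero[OF assms(5-7)])
    have s: "s = - r - t" using assms(4) by simp
    have eq: "complex_of_real r * x (k+2) + complex_of_real s * x (k+1) + complex_of_real t * x k
      = complex_of_real (r * (ln (real k + 3) - ln (real k + 2)) + t * (ln (real k + 1) - ln (real k + 2)))" for k
      unfolding x_def s by (simp add: algebra_simps add.assoc)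
    have l1: "(\<lambda>k. ln (real k + 3) - ln (real k + 2)) \<longlonglongrightarrow> 0" by real_asymp
    have l2: "(\<lambda>k. ln (real k + 1) - ln (real k + 2)) \<longlonglongrightarrow> 0" by real_asymp
    have "(\<lambda>k. r * (ln (real k + 3) - ln (real k + 2)) + t * (ln (real k + 1) - ln (real k + 2))) \<longlonglongrightarrow> r * 0 + t * 0"
      by (intro tendsto_intros l1 l2)
    then have "(\<lambda>k. complex_of_real (r * (ln (real k + 3) - ln (real k + 2)) + t * (ln (real k + 1) - ln (real k + 2)))) \<longlonglongrightarrow> complex_of_real 0"
      by (intro tendsto_of_real) simp
    then show "(\<lambda>k. complex_of_real r * x (k+2) + complex_of_real s * x (k+1)
         + complex_of_real t * x k) \<longlonglongrightarrow> 0" unfolding eq by simp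
  qed
  have xnot: "x \<notin> c_seq"
  proof
    assume "x \<in> c_seq"
    then obtain L where "x \<longlonglongrightarrow> L" unfolding c_seq_def by (auto simp: convergent_def)
    then have "(\<lambda>k. Re (x k)) \<longlonglongrightarrow> Re L" by (rule tendsto_Re)
    then have a: "(\<lambda>k. ln (real k + 1)) \<longlonglongrightarrow> Re L" unfolding x_def by simp
    have b: "filterlim (\<lambda>k. ln (real k + 1)) at_top sequentially" by real_asymp
    show False using not_tendsto_and_filterlim_at_infinity[OF _ a filterlim_at_top_imp_at_infinity[OF b]] by simp
  qed
  show ?thesis using sub xin xnot by blast
qed

end
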